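(* In the single-access setting below (i.e. $n=1$), for every $k\ge\max(m,1)$: $\mathrm{Valid}(k)\Rightarrow\mathrm{Valid}(k+1)$. Setting: fix $r\ge0$, a set $V$ of values, one index transformer $e:\mathbb{Z}^r\to\mathbb{Z}$, $m\ge0$ condition predicates $g_1,\dots,g_m:\mathbb{Z}^r\to\{\mathsf{true},\mathsf{false}\}$, a function $F:V\times\{\mathsf{true},\mathsf{false}\}^m\to\{\mathsf{true},\mathsf{false}\}$, and a formula $P\in\Phi_{\wedge,\vee}$ whose atoms are fold-atoms $a_\gamma$, $\gamma:\mathbb{Z}^r\to\{\mathsf{true},\mathsf{false}\}$. Define $\mathrm{Valid}(k)$ to be: for all $u:[k]\to\mathbb{Z}^r$ and all $X:\mathbb{Z}^{[k]}\to V$, if $P^k(u)$ then $F\big(X(\alpha(u)),\mathrm{fold}_k(g_1,u),\dots,\mathrm{fold}_k(g_m,u)\big)=\mathsf{true}$, where $\alpha(u):[k]\to\mathbb{Z}$, $j\mapsto e(u(j))$.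
   Context: $[k]=\{1,\dots,k\}$. For $\gamma:A\to\{\mathsf{true},\mathsf{false}\}$ and $u:[k]\to A$, $\mathrm{fold}_k(\gamma,u)=\bigwedge_{j\in[k]}\gamma(u(j))$. $\Phi_{\wedge,\vee}$ is the set of negation-free formulas built from atoms with $\wedge,\vee$, and $P^k(u)$ is the truth value of $P$ when each atom $a_\gamma$ is interpreted as $\mathrm{fold}_k(\gamma,u)$. Interpretation in the paper: $k$ is the rank of the single aggregated axis of a rewrite rule; $u$ bundles all integer maps on that axis (tensor shape, operator attributes, the output access); $P$ encodes precondition, validity of the LHS expression and validity of the access; $X$ is the input tensor; $F$ is the scalar function ("scalarf") comparing LHS and RHS values; $\mathrm{Valid}(k)$ says the rule holds at rank $k$. *)

theory Defs
  imports Main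
begin

text \<open>Points of Z^r are represented as int lists of length r; maps [k] -> Z (elements
of Z^[k]) as int lists of length k (entry j-1 = value at j).\<close>

definition foldk :: "nat \<Rightarrow> ('c \<Rightarrow> bool) \<Rightarrow> (nat \<Rightarrow> 'c) \<Rightarrow> bool" where
  "foldk k \<gamma> u = (\<forall>j\<in>{1..k}. \<gamma> (u j))"

datatype 'c pform = Atom "'c \<Rightarrow> bool" | PAnd "'c pform" "'c pform" | POr "'c pform" "'c pform"

fun peval :: "'c pform \<Rightarrow> nat \<Rightarrow> (nat \<Rightarrow> 'c) \<Rightarrow> bool" where
  "peval (Atom \<gamma>) k u = foldk k \<gamma> u"
| "peval (PAnd p q) k u = (peval p k u \<and> peval q k u)"
| "peval (POr p q) k u = (peval p k u \<or> peval q k u)"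

text \<open>Valid(k). gs = [g_1,...,g_m]; F takes a value and an m-tuple of booleans (as a list).\<close>
definition Valid ::
  "nat \<Rightarrow> 'v set \<Rightarrow> (int list \<Rightarrow> int) \<Rightarrow> (int list \<Rightarrow> bool) list \<Rightarrow>
   ('v \<Rightarrow> bool list \<Rightarrow> bool) \<Rightarrow> int list pform \<Rightarrow> nat \<Rightarrow> bool" where
  "Valid r V e gs F P k =
    (\<forall>u :: nat \<Rightarrow> int list. (\<forall>j\<in>{1..k}. length (u j) = r) \<longrightarrow>
      (\<forall>X :: int list \<Rightarrow> 'v. (\<forall>xs. length xs = k \<longrightarrow> X xs \<in> V) \<longrightarrow>
        peval P k u \<longrightarrow>
        F (X (map (\<lambda>j. e (u j)) [1..<k+1])) (map (\<lambda>g. foldk k g u) gs)))"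

end

theory Submission
  imports Defs
begin

lemma peval_mono:
  assumes "\<forall>j\<in>{1..k}. \<sigma> j \<in> {1..k'}"
  shows "peval P k' u \<Longrightarrow> peval P k (u \<circ> \<sigma>)"
  using assms by (induction P) (auto simp: foldk_def)

theorem mainTheorem3:
  fixes r :: nat and V :: "'v set" and e :: "int list \<Rightarrow> int"
    and gs :: "(int list \<Rightarrow> bool) list" and F :: "'v \<Rightarrow> bool list \<Rightarrow> bool"
    and P :: "int list pform" and k :: nat
  assumes "k \<ge> max (length gs) 1"
    and "Valid r V e gs F P k"
  shows "Valid r V e gs F P (k + 1)"
  unfolding Valid_def
proof (intro allI impI)
  fix u :: "nat \<Rightarrow> int list" and X :: "int list \<Rightarrow> 'v"
  assume len: "\<forall>j\<in>{1..k+1}. length (u j) = r"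
    and XV: "\<forall>xs. length xs = k + 1 \<longrightarrow> X xs \<in> V"
    and Pu: "peval P (k + 1) u"
  define x where "x = X (map (\<lambda>j. e (u j)) [1..<k+1+1])"
  have xV: "x \<in> V" unfolding x_def using XV by simp
  define w where "w i = (if foldk (k+1) (gs ! i) u then 1
     else (SOME j. j \<in> {1..k+1} \<and> \<not> (gs ! i) (u j)))" for i
  have w1: "w i \<in> {1..k+1}" for i
  proof (cases "foldk (k+1) (gs ! i) u")
    case False
    then have "\<exists>j. j \<in> {1..k+1} \<and> \<not> (gs ! i) (u j)" by (auto simp: foldk_def)
    then have "(SOME j. j \<in> {1..k+1} \<and> \<not> (gs ! i) (u j)) \<in> {1..k+1} \<and> \<not> (gs ! i) (u (SOME j. j \<in> {1..k+1} \<and> \<not> (gs ! i) (u j)))" by (rule someI_ex)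
    then show ?thesis using False by (simp add: w_def)
  qed (simp add: w_def)
  have w2: "\<not> foldk (k+1) (gs ! i) u \<Longrightarrow> \<not> (gs ! i) (u (w i))" for i
  proof -
    assume F: "\<not> foldk (k+1) (gs ! i) u"
    then have "\<exists>j. j \<in> {1..k+1} \<and> \<not> (gs ! i) (u j)" by (auto simp: foldk_def)
    then have "(SOME j. j \<in> {1..k+1} \<and> \<not> (gs ! i) (u j)) \<in> {1..k+1} \<and> \<not> (gs ! i) (u (SOME j. j \<in> {1..k+1} \<and> \<not> (gs ! i) (u j)))" by (rule someI_ex)
    then show ?thesis using F by (simp add: w_def)
  qed
  define \<sigma> where "\<sigma> j = (if j \<le> length gs then w (j - 1) else 1)" for j
  have sig: "\<forall>j\<in>{1..k}. \<sigma> j \<in> {1..k+1}" using w1 by (simp add: \<sigma>_def)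
  have fold_eq: "foldk k g (u \<circ> \<sigma>) = foldk (k+1) g u" if g: "g \<in> set gs" for g
  proof
    assume "foldk (k+1) g u" then show "foldk k g (u \<circ> \<sigma>)"
      using sig by (auto simp: foldk_def)
  next
    assume A: "foldk k g (u \<circ> \<sigma>)"
    show "foldk (k+1) g u"
    proof (rule ccontr)
      assume N: "\<not> foldk (k+1) g u"
      obtain i where i: "i < length gs" "gs ! i = g" using g by (meson in_set_conv_nth)
      have "Suc i \<in> {1..k}" using i assms(1) by auto
      then have "g ((u \<circ> \<sigma>) (Suc i))" using A unfolding foldk_def by (rule bspec[rotated])
      moreover have "\<sigma> (Suc i) = w i" using i by (simp add: \<sigma>_def)
      ultimately have "g (u (w i))" by simp
      with w2[of i] N i show False by simp
    qed
  qed
  have lenk: "\<forall>j\<in>{1..k}. length ((u \<circ> \<sigma>) j) = r" using len sig by auto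
  have XV': "\<forall>xs. length xs = k \<longrightarrow> (\<lambda>_. x) xs \<in> V" using xV by simp
  have Pk: "peval P k (u \<circ> \<sigma>)" by (rule peval_mono[OF sig Pu])
  have "F ((\<lambda>_. x) (map (\<lambda>j. e ((u \<circ> \<sigma>) j)) [1..<k+1])) (map (\<lambda>g. foldk k g (u \<circ> \<sigma>)) gs)"
    by (rule assms(2)[unfolded Valid_def, rule_format, of "u \<circ> \<sigma>" "\<lambda>_. x", OF _ _ Pk]) (use lenk xV in auto)
  then have "F x (map (\<lambda>g. foldk k g (u \<circ> \<sigma>)) gs)" by simp
  moreover have "map (\<lambda>g. foldk k g (u \<circ> \<sigma>)) gs = map (\<lambda>g. foldk (k+1) g u) gs"
    using fold_eq by simp
  ultimately show "F (X (map (\<lambda>j. e (u j)) [1..<k + 1 + 1])) (map (\<lambda>g. foldk (k + 1) g u) gs)"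
    unfolding x_def by simp
qed

end
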